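(* If $S$ is a numerical semigroup whose set of Betti elements $\mathrm{Betti}(S)$ is totally ordered by $\le_S$ (i.e. $S$ is Betti-sorted), then $S$ is a complete intersection.
   Context: A numerical semigroup is a submonoid of $(\mathbb N,+)$ with finite complement, minimally generated by $\{n_1,\dots,n_e\}$. Write $a\le_S b$ if $b-a\in S$. Let $\varphi:\mathbb N^e\to S$, $\varphi(a)=\sum_ia_in_i$, $\mathrm Z(s)=\varphi^{-1}(s)$. $\nabla_s$ is the graph on $\mathrm Z(s)$ with distinct $x,y$ adjacent iff $x\cdot y\neq0$; $\mathrm{nc}(\nabla_s)$ is its number of connected components; $s$ is a Betti element if $\nabla_s$ is disconnected. A minimal presentation of $S$ is a minimal (by inclusion) system of generators of the congruence $\ker\varphi=\{(a,b):\varphi(a)=\varphi(b)\}$; all minimal presentations have cardinality $\sum_{b\in\mathrm{Betti}(S)}(\mathrm{nc}(\nabla_b)-1)\ge e-1$. $S$ is a complete intersection if this cardinality equals $e-1$. *)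

theory Defs
  imports Main
begin

definition numerical_semigroup :: "nat set \<Rightarrow> bool" where
  "numerical_semigroup S \<longleftrightarrow> 0 \<in> S \<and> (\<forall>a\<in>S. \<forall>b\<in>S. a + b \<in> S) \<and> finite (UNIV - S)"

definition min_gens :: "nat set \<Rightarrow> nat set" where
  "min_gens S = {n \<in> S. n \<noteq> 0 \<and> \<not> (\<exists>a\<in>S. \<exists>b\<in>S. a \<noteq> 0 \<and> b \<noteq> 0 \<and> n = a + b)}"

definition embdim :: "nat set \<Rightarrow> nat" where
  "embdim S = card (min_gens S)"

text \<open>N^e is represented as functions from the minimal generators to nat
(zero outside), i.e. a n is the coefficient of generator n.\<close>
definition facts :: "nat set \<Rightarrow> (nat \<Rightarrow> nat) set" where
  "facts S = {a. \<forall>n. n \<notin> min_gens S \<longrightarrow> a n = 0}"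

definition phi :: "nat set \<Rightarrow> (nat \<Rightarrow> nat) \<Rightarrow> nat" where
  "phi S a = (\<Sum>n\<in>min_gens S. a n * n)"

definition Z :: "nat set \<Rightarrow> nat \<Rightarrow> (nat \<Rightarrow> nat) set" where
  "Z S s = {a \<in> facts S. phi S a = s}"

definition nabla_edges :: "nat set \<Rightarrow> nat \<Rightarrow> ((nat \<Rightarrow> nat) \<times> (nat \<Rightarrow> nat)) set" where
  "nabla_edges S s = {(x, y). x \<in> Z S s \<and> y \<in> Z S s \<and> x \<noteq> y \<and>
      (\<Sum>n\<in>min_gens S. x n * y n) \<noteq> 0}"

definition nc :: "nat set \<Rightarrow> nat \<Rightarrow> nat" where
  "nc S s = card (Z S s // (Id_on (Z S s) \<union> (nabla_edges S s)\<^sup>+))"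

definition Betti :: "nat set \<Rightarrow> nat set" where
  "Betti S = {s \<in> S. nc S s > 1}"

definition le_S :: "nat set \<Rightarrow> nat \<Rightarrow> nat \<Rightarrow> bool" where
  "le_S S a b \<longleftrightarrow> a \<le> b \<and> b - a \<in> S"

definition betti_sorted :: "nat set \<Rightarrow> bool" where
  "betti_sorted S \<longleftrightarrow> (\<forall>a\<in>Betti S. \<forall>b\<in>Betti S. le_S S a b \<or> le_S S b a)"

definition kernel_cong :: "nat set \<Rightarrow> ((nat \<Rightarrow> nat) \<times> (nat \<Rightarrow> nat)) set" where
  "kernel_cong S = {(a, b). a \<in> facts S \<and> b \<in> facts S \<and> phi S a = phi S b}"

inductive_set cong_gen :: "nat set \<Rightarrow> ((nat \<Rightarrow> nat) \<times> (nat \<Rightarrow> nat)) set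
    \<Rightarrow> ((nat \<Rightarrow> nat) \<times> (nat \<Rightarrow> nat)) set"
  for S :: "nat set" and \<rho> :: "((nat \<Rightarrow> nat) \<times> (nat \<Rightarrow> nat)) set" where
  base: "p \<in> \<rho> \<Longrightarrow> p \<in> cong_gen S \<rho>"
| refl: "a \<in> facts S \<Longrightarrow> (a, a) \<in> cong_gen S \<rho>"
| sym: "(a, b) \<in> cong_gen S \<rho> \<Longrightarrow> (b, a) \<in> cong_gen S \<rho>"
| trans: "(a, b) \<in> cong_gen S \<rho> \<Longrightarrow> (b, c) \<in> cong_gen S \<rho> \<Longrightarrow> (a, c) \<in> cong_gen S \<rho>"
| add: "(a, b) \<in> cong_gen S \<rho> \<Longrightarrow> c \<in> facts S \<Longrightarrow>
         ((\<lambda>n. a n + c n), (\<lambda>n. b n + c n)) \<in> cong_gen S \<rho>"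

definition minimal_presentation :: "nat set \<Rightarrow> ((nat \<Rightarrow> nat) \<times> (nat \<Rightarrow> nat)) set \<Rightarrow> bool" where
  "minimal_presentation S \<rho> \<longleftrightarrow>
     \<rho> \<subseteq> facts S \<times> facts S \<and> cong_gen S \<rho> = kernel_cong S \<and>
     (\<forall>\<sigma>. \<sigma> \<subset> \<rho> \<longrightarrow> cong_gen S \<sigma> \<noteq> kernel_cong S)"

definition complete_intersection :: "nat set \<Rightarrow> bool" where
  "complete_intersection S \<longleftrightarrow>
     (\<forall>\<rho>. minimal_presentation S \<rho> \<longrightarrow> finite \<rho> \<and> card \<rho> = embdim S - 1)"

end

theory Submission
  imports Defs "HOL-Library.Function_Algebras" "HOL.Vector_Spaces" "HOL.Rat"
begin


lemma ns_bound:
  assumes "numerical_semigroup S"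
  obtains N where "\<forall>x\<ge>N. x \<in> S"
proof -
  have fin: "finite (UNIV - S)" using assms by (simp add: numerical_semigroup_def)
  obtain N where "\<forall>x\<in>UNIV - S. x < N"
    using fin finite_nat_set_iff_bounded by blast
  then have "\<forall>x\<ge>N. x \<in> S" by (metis DiffI UNIV_I not_less)
  then show ?thesis using that by blast
qed

lemma ns_zero: "numerical_semigroup S \<Longrightarrow> 0 \<in> S"
  by (simp add: numerical_semigroup_def)

lemma ns_add: "numerical_semigroup S \<Longrightarrow> a \<in> S \<Longrightarrow> b \<in> S \<Longrightarrow> a + b \<in> S"
  by (simp add: numerical_semigroup_def)

lemma min_gens_sub: "n \<in> min_gens S \<Longrightarrow> n \<in> S \<and> n \<noteq> 0"
  by (simp add: min_gens_def)

lemma finite_min_gens: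
  assumes "numerical_semigroup S"
  shows "finite (min_gens S)"
proof -
  obtain N where N: "\<forall>x\<ge>N. x \<in> S" using ns_bound[OF assms] by blast
  have "min_gens S \<subseteq> {..2*N+1}"
  proof
    fix n assume n: "n \<in> min_gens S"
    show "n \<in> {..2*N+1}"
    proof (rule ccontr)
      assume "n \<notin> {..2*N+1}"
      then have "n > 2*N+1" by simp
      then have h1: "N+1 \<in> S" "n - (N+1) \<in> S" using N by simp_all
      have h2: "n = (N+1) + (n - (N+1))" "n - (N+1) \<noteq> 0" "N + 1 \<noteq> 0" using \<open>n > 2*N+1\<close> by auto
      have "\<not> (\<exists>a\<in>S. \<exists>b\<in>S. a \<noteq> 0 \<and> b \<noteq> 0 \<and> n = a + b)"
        using n unfolding min_gens_def by simp
      moreover have "\<exists>a\<in>S. \<exists>b\<in>S. a \<noteq> 0 \<and> b \<noteq> 0 \<and> n = a + b"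
        apply (rule bexI[OF _ h1(1)], rule bexI[OF _ h1(2)]) using h2 by simp
      ultimately show False by auto
    qed
  qed
  then show ?thesis using finite_subset[OF _ finite_atMost] by blast
qed

lemma facts_outside: "a \<in> facts S \<Longrightarrow> a n \<noteq> 0 \<Longrightarrow> n \<in> min_gens S"
  by (auto simp: facts_def)

lemma mult_in_S: "numerical_semigroup S \<Longrightarrow> n \<in> S \<Longrightarrow> k * n \<in> S"
  by (induction k) (auto simp: ns_zero ns_add)

lemma sum_in_S:
  assumes "numerical_semigroup S" "finite A" "\<forall>n\<in>A. f n \<in> S"
  shows "sum f A \<in> S"
  using assms(2,3) by (induction A rule: finite_induct) (auto simp: ns_zero[OF assms(1)] ns_add[OF assms(1)])

lemma phi_in_S:
  assumes "numerical_semigroup S"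
  shows "phi S a \<in> S"
  unfolding phi_def
  by (rule sum_in_S[OF assms finite_min_gens[OF assms]]) (auto intro: mult_in_S[OF assms] dest: min_gens_sub)

lemma phi_add: "phi S (\<lambda>n. x n + y n) = phi S x + phi S y"
  by (simp add: phi_def sum.distrib add_mult_distrib)

definition delta :: "nat \<Rightarrow> nat \<Rightarrow> nat \<Rightarrow> nat" where
  "delta m k = (\<lambda>i. if i = m then k else 0)"

lemma delta_facts: "m \<in> min_gens S \<Longrightarrow> delta m k \<in> facts S"
  by (auto simp: delta_def facts_def)

lemma phi_delta:
  assumes "finite (min_gens S)" "m \<in> min_gens S"
  shows "phi S (delta m k) = k * m"
proof -
  have "phi S (delta m k) = (\<Sum>n\<in>min_gens S. if n = m then k * m else 0)"
    unfolding phi_def delta_def by (rule sum.cong) auto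
  also have "\<dots> = k * m" using assms by simp
  finally show ?thesis .
qed

lemma coeff_le_phi:
  assumes "finite (min_gens S)" "n \<in> min_gens S"
  shows "a n * n \<le> phi S a"
  unfolding phi_def using assms by (intro member_le_sum) auto

lemma coeff_le_phi2:
  assumes "finite (min_gens S)" "n \<in> min_gens S"
  shows "a n \<le> phi S a"
proof -
  have "n \<ge> 1" using assms(2) min_gens_sub by fastforce
  then have "a n \<le> a n * n" by simp
  then show ?thesis using coeff_le_phi[OF assms, of a] by linarith
qed

lemma finite_Z:
  assumes "finite (min_gens S)"
  shows "finite (Z S s)"
proof -
  have "Z S s \<subseteq> {f. \<forall>x. (x \<in> min_gens S \<longrightarrow> f x \<in> {..s}) \<and> (x \<notin> min_gens S \<longrightarrow> f x = 0)}"
    using coeff_le_phi2[OF assms] by (auto simp: Z_def facts_def)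
  then show ?thesis using finite_set_of_finite_funs[OF assms, of "{..s}" 0] finite_subset by fastforce
qed

lemma phi_zero_iff:
  assumes "finite (min_gens S)" "a \<in> facts S"
  shows "phi S a = 0 \<longleftrightarrow> a = (\<lambda>_. 0)"
proof
  assume "phi S a = 0"
  then have "\<forall>n\<in>min_gens S. a n * n = 0" using assms(1) by (simp add: phi_def)
  then have "\<forall>n\<in>min_gens S. a n = 0" using min_gens_sub by fastforce
  then show "a = (\<lambda>_. 0)" using assms(2) unfolding facts_def by fastforce
next
  assume "a = (\<lambda>_. 0)"
  then show "phi S a = 0" by (simp add: phi_def)
qed

lemma Z_nonempty:
  assumes ns: "numerical_semigroup S"
  shows "s \<in> S \<Longrightarrow> Z S s \<noteq> {}"
proof (induction s rule: less_induct)
  case (less s)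
  have fin: "finite (min_gens S)" using finite_min_gens[OF ns] .
  show ?case
  proof (cases "s = 0")
    case True
    then have "(\<lambda>_. 0) \<in> Z S s" by (simp add: Z_def facts_def phi_def)
    then show ?thesis by blast
  next
    case False
    show ?thesis
    proof (cases "s \<in> min_gens S")
      case True
      then have "delta s 1 \<in> Z S s" by (simp add: Z_def delta_facts phi_delta[OF fin])
      then show ?thesis by blast
    next
      case nm: False
      have "\<exists>a\<in>S. \<exists>b\<in>S. a \<noteq> 0 \<and> b \<noteq> 0 \<and> s = a + b"
        using less.prems False nm unfolding min_gens_def by simp
      then obtain a b where ab: "a \<in> S" "b \<in> S" "a \<noteq> 0" "b \<noteq> 0" "s = a + b"
        by blast
      have "a < s" "b < s" using ab by auto
      then obtain x y where "x \<in> Z S a" "y \<in> Z S b" using less.IH[of a] less.IH[of b] ab(1,2) by blast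
      then have "(\<lambda>n. x n + y n) \<in> Z S s"
        unfolding Z_def facts_def by (simp add: phi_add ab(5))
      then show ?thesis by blast
    qed
  qed
qed



section \<open>Equivalence closures and counting\<close>

definition eqc :: "'a set \<Rightarrow> ('a \<times> 'a) set \<Rightarrow> ('a \<times> 'a) set" where
  "eqc V E = Id_on V \<union> (E \<union> E\<inverse>)\<^sup>+"

lemma eqc_sym: "(a, b) \<in> eqc V E \<Longrightarrow> (b, a) \<in> eqc V E"
proof -
  assume h: "(a, b) \<in> eqc V E"
  have "sym (E \<union> E\<inverse>)" by (auto simp: sym_def)
  then have "sym ((E \<union> E\<inverse>)\<^sup>+)" by (rule sym_trancl)
  then show ?thesis using h unfolding eqc_def by (auto simp: sym_def)
qed

lemma eqc_trans: "(a, b) \<in> eqc V E \<Longrightarrow> (b, c) \<in> eqc V E \<Longrightarrow> (a, c) \<in> eqc V E"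
  unfolding eqc_def by (auto dest: trancl_trans)

lemma eqc_sub: "E \<subseteq> V \<times> V \<Longrightarrow> eqc V E \<subseteq> V \<times> V"
proof -
  assume "E \<subseteq> V \<times> V"
  then have "E \<union> E\<inverse> \<subseteq> V \<times> V" by auto
  then have "(E \<union> E\<inverse>)\<^sup>+ \<subseteq> V \<times> V" by (rule trancl_subset_Sigma)
  then show ?thesis unfolding eqc_def by auto
qed

lemma eqc_equiv: assumes E: "E \<subseteq> V \<times> V" shows "equiv V (eqc V E)"
proof (rule equivI)
  show "eqc V E \<subseteq> V \<times> V" using eqc_sub[OF E] .
  show "refl_on V (eqc V E)"
    unfolding refl_on_def using eqc_sub[OF E] by (auto simp: eqc_def)
  show "sym (eqc V E)" unfolding sym_def using eqc_sym by fast
  show "trans (eqc V E)" unfolding trans_def using eqc_trans by fast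
qed

lemma eqc_edge: "(a, b) \<in> E \<Longrightarrow> (a, b) \<in> eqc V E"
  unfolding eqc_def by auto

lemma eqc_refl: "a \<in> V \<Longrightarrow> (a, a) \<in> eqc V E"
  unfolding eqc_def by auto

lemma eqc_least:
  assumes "E' \<subseteq> V \<times> V" "E \<subseteq> eqc V E'"
  shows "eqc V E \<subseteq> eqc V E'"
proof -
  have tr: "trans (eqc V E')" using eqc_equiv[OF assms(1)] by (simp add: equiv_def)
  have "E \<union> E\<inverse> \<subseteq> eqc V E'" using assms(2) eqc_sym by fastforce
  then have "(E \<union> E\<inverse>)\<^sup>+ \<subseteq> (eqc V E')\<^sup>+" by (auto intro: trancl_mono)
  also have "\<dots> = eqc V E'" using trancl_id[OF tr] .
  finally show ?thesis unfolding eqc_def[of V E] using eqc_refl[of _ V E'] by auto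
qed

lemma eqc_mono: "E' \<subseteq> V \<times> V \<Longrightarrow> E \<subseteq> E' \<Longrightarrow> eqc V E \<subseteq> eqc V E'"
  unfolding eqc_def by (auto intro: trancl_mono)

lemma eqc_insert_same:
  assumes "E \<subseteq> V \<times> V" "(u, v) \<in> eqc V E"
  shows "eqc V (insert (u, v) E) = eqc V E"
proof
  show "eqc V (insert (u, v) E) \<subseteq> eqc V E"
  proof (rule eqc_least[OF assms(1)])
    show "insert (u, v) E \<subseteq> eqc V E" using assms(2) by (auto intro: eqc_edge)
  qed
  have "u \<in> V" "v \<in> V" using eqc_sub[OF assms(1)] assms(2) by auto
  then show "eqc V E \<subseteq> eqc V (insert (u, v) E)"
    using assms(1) by (intro eqc_mono) auto
qed

lemma eqc_insert_cong:
  assumes "E1 \<subseteq> V \<times> V" "E2 \<subseteq> V \<times> V" "f \<in> V \<times> V" "eqc V E1 = eqc V E2"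
  shows "eqc V (insert f E1) = eqc V (insert f E2)"
proof -
  have A: "eqc V (insert f E1) \<subseteq> eqc V (insert f E2)" if
    "E1 \<subseteq> V \<times> V" "E2 \<subseteq> V \<times> V" "f \<in> V \<times> V" "eqc V E1 = eqc V E2" for E1 E2
  proof (rule eqc_least)
    show "insert f E2 \<subseteq> V \<times> V" using that by auto
    have "E1 \<subseteq> eqc V E1" by (auto intro: eqc_edge)
    also have "\<dots> = eqc V E2" using that by simp
    also have "\<dots> \<subseteq> eqc V (insert f E2)" using that by (intro eqc_mono) auto
    finally show "insert f E1 \<subseteq> eqc V (insert f E2)" using eqc_edge[of "fst f" "snd f" "insert f E2" V]
      by simp
  qed
  show ?thesis using A[of E1 E2] A[of E2 E1] assms by auto
qed

lemma eqc_merge_card: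
  assumes fin: "finite V" and E: "E \<subseteq> V \<times> V" and uv: "u \<in> V" "v \<in> V" "(u, v) \<notin> eqc V E"
  shows "card (V // eqc V (insert (u, v) E)) < card (V // eqc V E)"
proof -
  let ?R = "eqc V E" and ?R' = "eqc V (insert (u, v) E)"
  have E': "insert (u, v) E \<subseteq> V \<times> V" using E uv by auto
  have eqR: "equiv V ?R" using eqc_equiv[OF E] .
  have eqR': "equiv V ?R'" using eqc_equiv[OF E'] .
  have sub: "?R \<subseteq> ?R'" using eqc_mono[OF E'] by auto
  define h where "h X = ?R' `` X" for X
  have hcl: "h (?R `` {x}) = ?R' `` {x}" if "x \<in> V" for x
  proof
    show "h (?R `` {x}) \<subseteq> ?R' `` {x}"
    proof
      fix y assume "y \<in> h (?R `` {x})"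
      then obtain z where z: "(z, y) \<in> ?R'" "(x, z) \<in> ?R" unfolding h_def by blast
      then have "(x, z) \<in> ?R'" using sub by blast
      then show "y \<in> ?R' `` {x}" using eqc_trans[OF _ z(1)] by blast
    qed
    show "?R' `` {x} \<subseteq> h (?R `` {x})"
      unfolding h_def using that eqc_refl[of x V E] by blast
  qed
  have img: "h ` (V // ?R) = V // ?R'"
  proof
    show "h ` (V // ?R) \<subseteq> V // ?R'"
    proof
      fix Y assume "Y \<in> h ` (V // ?R)"
      then obtain x where x: "x \<in> V" "Y = h (?R `` {x})" unfolding quotient_def by blast
      then have "Y = ?R' `` {x}" using hcl by simp
      then show "Y \<in> V // ?R'" using x(1) unfolding quotient_def by blast
    qed
    show "V // ?R' \<subseteq> h ` (V // ?R)"
    proof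
      fix Y assume "Y \<in> V // ?R'"
      then obtain x where x: "x \<in> V" "Y = ?R' `` {x}" unfolding quotient_def by blast
      then have "Y = h (?R `` {x})" using hcl by simp
      moreover have "?R `` {x} \<in> V // ?R" using x unfolding quotient_def by blast
      ultimately show "Y \<in> h ` (V // ?R)" by blast
    qed
  qed
  have ninj: "\<not> inj_on h (V // ?R)"
  proof
    assume inj: "inj_on h (V // ?R)"
    have "h (?R `` {u}) = h (?R `` {v})"
      using hcl uv eqc_edge[of u v "insert (u,v) E" V] equiv_class_eq[OF eqR'] by simp
    moreover have "?R `` {u} \<in> V // ?R" "?R `` {v} \<in> V // ?R" using uv unfolding quotient_def by blast+
    ultimately have "?R `` {u} = ?R `` {v}" by (rule inj_onD[OF inj])
    then have "(u, v) \<in> ?R" using eq_equiv_class_iff[OF eqR uv(1,2)] by simp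
    then show False using uv(3) by simp
  qed
  have finQ: "finite (V // ?R)" using finite_quotient[OF fin] eqc_sub[OF E] by blast
  have "card (h ` (V // ?R)) \<le> card (V // ?R)" using card_image_le[OF finQ] .
  moreover have "card (h ` (V // ?R)) \<noteq> card (V // ?R)" using ninj eq_card_imp_inj_on[OF finQ] by blast
  ultimately show ?thesis using img by simp
qed

lemma eqc_count:
  assumes fin: "finite V" and finF: "finite F" and BF: "B \<union> F \<subseteq> V \<times> V"
    and ess: "\<forall>f\<in>F. eqc V (B \<union> (F - {f})) \<noteq> eqc V (B \<union> F)"
  shows "card F + card (V // eqc V (B \<union> F)) \<le> card (V // eqc V B)"
  using finF BF ess
proof (induction F rule: finite_induct)
  case empty
  then show ?case by simp
next
  case (insert f F)
  have BF': "B \<union> F \<subseteq> V \<times> V" using insert.prems(1) by auto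
  have fV: "f \<in> V \<times> V" using insert.prems(1) by auto
  have ess': "\<forall>g\<in>F. eqc V (B \<union> (F - {g})) \<noteq> eqc V (B \<union> F)"
  proof (intro ballI notI)
    fix g assume g: "g \<in> F" and eq: "eqc V (B \<union> (F - {g})) = eqc V (B \<union> F)"
    have "eqc V (insert f (B \<union> (F - {g}))) = eqc V (insert f (B \<union> F))"
    proof (rule eqc_insert_cong[OF _ BF' fV eq])
      show "B \<union> (F - {g}) \<subseteq> V \<times> V" using BF' by auto
    qed
    moreover have "insert f (B \<union> (F - {g})) = B \<union> (insert f F - {g})" using g insert.hyps(2) by auto
    moreover have "insert f (B \<union> F) = B \<union> insert f F" by auto
    ultimately have "eqc V (B \<union> (insert f F - {g})) = eqc V (B \<union> insert f F)" by metis
    moreover have "g \<in> insert f F" using g by simp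
    ultimately show False using bspec[OF insert.prems(2) \<open>g \<in> insert f F\<close>] by simp
  qed
  have IH: "card F + card (V // eqc V (B \<union> F)) \<le> card (V // eqc V B)"
    using insert.IH[OF BF' ess'] .
  obtain u v where f: "f = (u, v)" by (cases f)
  have uv: "u \<in> V" "v \<in> V" using fV f by auto
  have "eqc V (B \<union> (insert f F - {f})) \<noteq> eqc V (B \<union> insert f F)"
    using bspec[OF insert.prems(2), of f] by simp
  moreover have "B \<union> (insert f F - {f}) = B \<union> F" using insert.hyps(2) by auto
  moreover have "B \<union> insert f F = insert (u, v) (B \<union> F)" using f by auto
  ultimately have ne: "eqc V (B \<union> F) \<noteq> eqc V (insert (u, v) (B \<union> F))" by metis
  have "(u, v) \<notin> eqc V (B \<union> F)"
  proof
    assume "(u, v) \<in> eqc V (B \<union> F)"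
    then have "eqc V (insert (u, v) (B \<union> F)) = eqc V (B \<union> F)" by (rule eqc_insert_same[OF BF'])
    then show False using ne by simp
  qed
  then have "card (V // eqc V (insert (u, v) (B \<union> F))) < card (V // eqc V (B \<union> F))"
    using eqc_merge_card[OF fin BF' uv] by blast
  moreover have "card (insert f F) = card F + 1" using insert.hyps by simp
  moreover have "eqc V (B \<union> insert f F) = eqc V (insert (u, v) (B \<union> F))" using f by simp
  ultimately show ?case using IH
  proof -
    assume a: "card (V // eqc V (insert (u, v) (B \<union> F))) < card (V // eqc V (B \<union> F))"
      "card (insert f F) = card F + 1" "eqc V (B \<union> insert f F) = eqc V (insert (u, v) (B \<union> F))"
      "card F + card (V // eqc V (B \<union> F)) \<le> card (V // eqc V B)"
    show ?thesis unfolding a(2,3) using a(1,4) by linarith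
  qed
qed



section \<open>Presentations and connectivity\<close>

definition rs :: "nat set \<Rightarrow> ((nat \<Rightarrow> nat) \<times> (nat \<Rightarrow> nat)) set \<Rightarrow> nat \<Rightarrow> ((nat \<Rightarrow> nat) \<times> (nat \<Rightarrow> nat)) set" where
  "rs S \<rho> s = {p \<in> \<rho>. phi S (fst p) = s}"

definition conn :: "nat set \<Rightarrow> ((nat \<Rightarrow> nat) \<times> (nat \<Rightarrow> nat)) set \<Rightarrow> bool" where
  "conn S \<rho> \<longleftrightarrow> (\<forall>s. \<forall>x\<in>Z S s. \<forall>y\<in>Z S s. (x, y) \<in> eqc (Z S s) (nabla_edges S s \<union> rs S \<rho> s))"

lemma nabla_sub: "nabla_edges S s \<subseteq> Z S s \<times> Z S s"
  by (auto simp: nabla_edges_def)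

lemma rs_sub: "\<rho> \<subseteq> kernel_cong S \<Longrightarrow> rs S \<rho> s \<subseteq> Z S s \<times> Z S s"
  by (auto simp: rs_def kernel_cong_def Z_def)

lemma EE_sub: "\<rho> \<subseteq> kernel_cong S \<Longrightarrow> nabla_edges S s \<union> rs S \<rho> s \<subseteq> Z S s \<times> Z S s"
  using nabla_sub rs_sub by blast

lemma nabla_sym: "nabla_edges S s = (nabla_edges S s)\<inverse>"
proof -
  have "(\<Sum>n\<in>min_gens S. x n * y n) = (\<Sum>n\<in>min_gens S. y n * x n)" for x y :: "nat \<Rightarrow> nat"
    by (simp add: mult.commute)
  note cm = this
  show ?thesis unfolding nabla_edges_def
  proof (rule set_eqI)
    fix p :: "(nat \<Rightarrow> nat) \<times> (nat \<Rightarrow> nat)"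
    obtain x y where p: "p = (x, y)" by (cases p)
    show "p \<in> {(x, y). x \<in> Z S s \<and> y \<in> Z S s \<and> x \<noteq> y \<and> (\<Sum>n\<in>min_gens S. x n * y n) \<noteq> 0} \<longleftrightarrow>
      p \<in> {(x, y). x \<in> Z S s \<and> y \<in> Z S s \<and> x \<noteq> y \<and> (\<Sum>n\<in>min_gens S. x n * y n) \<noteq> 0}\<inverse>"
      unfolding p using cm[of x y] by auto
  qed
qed

lemma share_edge:
  assumes fin: "finite (min_gens S)" and xy: "x \<in> Z S s" "y \<in> Z S s" and n: "x n \<noteq> 0" "y n \<noteq> 0"
  shows "(x, y) \<in> eqc (Z S s) (nabla_edges S s \<union> F)"
proof (cases "x = y")
  case True
  then show ?thesis using xy eqc_refl[of y "Z S s"] by simp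
next
  case False
  have "x \<in> facts S" using xy(1) by (simp add: Z_def)
  then have nG: "n \<in> min_gens S" using n(1) by (rule facts_outside)
  have "(\<Sum>m\<in>min_gens S. x m * y m) \<noteq> 0"
  proof
    assume "(\<Sum>m\<in>min_gens S. x m * y m) = 0"
    then have "\<forall>m\<in>min_gens S. x m * y m = 0" using fin by simp
    then have "x n * y n = 0" using nG by (rule bspec)
    then show False using n by simp
  qed
  then have "(x, y) \<in> nabla_edges S s" using xy False unfolding nabla_edges_def by blast
  then have "(x, y) \<in> nabla_edges S s \<union> F" by blast
  then show ?thesis by (rule eqc_edge)
qed

lemma cong_gen_forward0:
  assumes fin: "finite (min_gens S)" and rk: "\<rho> \<subseteq> kernel_cong S"
  shows "p \<in> cong_gen S \<rho> \<Longrightarrow> fst p \<in> facts S \<and> snd p \<in> facts S \<and> phi S (fst p) = phi S (snd p) \<and>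
      p \<in> eqc (Z S (phi S (fst p))) (nabla_edges S (phi S (fst p)) \<union> rs S \<rho> (phi S (fst p)))"
proof (induction rule: cong_gen.induct)
  case (base p)
  obtain x y where p: "p = (x, y)" by (cases p)
  have k: "x \<in> facts S" "y \<in> facts S" "phi S x = phi S y" using base rk p by (auto simp: kernel_cong_def)
  have "(x, y) \<in> rs S \<rho> (phi S x)" using base p by (simp add: rs_def)
  then have "(x, y) \<in> eqc (Z S (phi S x)) (nabla_edges S (phi S x) \<union> rs S \<rho> (phi S x))"
    by (intro eqc_edge) simp
  then show ?case using k p by simp
next
  case (refl a)
  then show ?case by (auto intro: eqc_refl simp: Z_def)
next
  case (sym a b)
  note h = sym.IH[unfolded fst_conv snd_conv, THEN conjunct1]
    sym.IH[unfolded fst_conv snd_conv, THEN conjunct2, THEN conjunct1]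
    sym.IH[unfolded fst_conv snd_conv, THEN conjunct2, THEN conjunct2, THEN conjunct1]
    sym.IH[unfolded fst_conv snd_conv, THEN conjunct2, THEN conjunct2, THEN conjunct2]
  have "(b, a) \<in> eqc (Z S (phi S a)) (nabla_edges S (phi S a) \<union> rs S \<rho> (phi S a))"
    using h(4) by (rule eqc_sym)
  then show ?case using h(1,2,3) by simp
next
  case (trans a b c)
  note h = trans.IH(1)[unfolded fst_conv snd_conv, THEN conjunct1]
    trans.IH(2)[unfolded fst_conv snd_conv, THEN conjunct2, THEN conjunct1]
    trans.IH(1)[unfolded fst_conv snd_conv, THEN conjunct2, THEN conjunct2, THEN conjunct1]
    trans.IH(2)[unfolded fst_conv snd_conv, THEN conjunct2, THEN conjunct2, THEN conjunct1]
    trans.IH(1)[unfolded fst_conv snd_conv, THEN conjunct2, THEN conjunct2, THEN conjunct2]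
    trans.IH(2)[unfolded fst_conv snd_conv, THEN conjunct2, THEN conjunct2, THEN conjunct2]
  have "(a, c) \<in> eqc (Z S (phi S a)) (nabla_edges S (phi S a) \<union> rs S \<rho> (phi S a))"
    using h(5) h(6)[folded h(3)] by (rule eqc_trans)
  then show ?case using h(1,2,3,4) by simp
next
  case (add a b c)
  let ?a = "\<lambda>n. a n + c n" and ?b = "\<lambda>n. b n + c n"
  have fa: "?a \<in> facts S" "?b \<in> facts S" using add by (auto simp: facts_def)
  have ph: "phi S ?a = phi S ?b" using add by (simp add: phi_add)
  have Za: "?a \<in> Z S (phi S ?a)" "?b \<in> Z S (phi S ?a)" using fa ph by (auto simp: Z_def)
  show ?case
  proof (cases "\<exists>n. c n \<noteq> 0")
    case True
    then obtain n where "c n \<noteq> 0" by blast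
    then have "?a n \<noteq> 0" "?b n \<noteq> 0" by auto
    then have "(?a, ?b) \<in> eqc (Z S (phi S ?a)) (nabla_edges S (phi S ?a) \<union> rs S \<rho> (phi S ?a))"
      using share_edge[OF fin Za] by blast
    then show ?thesis using fa ph by simp
  next
    case False
    then have e: "?a = a" "?b = b" by auto
    show ?thesis using add.IH unfolding fst_conv snd_conv e .
  qed
qed

lemma cong_gen_forward:
  assumes fin: "finite (min_gens S)" and rk: "\<rho> \<subseteq> kernel_cong S"
  shows "(a, b) \<in> cong_gen S \<rho> \<Longrightarrow> a \<in> facts S \<and> b \<in> facts S \<and> phi S a = phi S b \<and>
      (a, b) \<in> eqc (Z S (phi S a)) (nabla_edges S (phi S a) \<union> rs S \<rho> (phi S a))"
  using cong_gen_forward0[OF fin rk, of "(a, b)"] unfolding fst_conv snd_conv .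

lemma cong_gen_kernel:
  assumes rk: "\<rho> \<subseteq> kernel_cong S"
  shows "cong_gen S \<rho> \<subseteq> kernel_cong S"
proof
  fix p assume "p \<in> cong_gen S \<rho>"
  then show "p \<in> kernel_cong S"
  proof (induction rule: cong_gen.induct)
    case (add a b c)
    then show ?case by (auto simp: kernel_cong_def facts_def phi_add)
  qed (use rk in \<open>auto simp: kernel_cong_def\<close>)
qed

lemma conn_of_pres:
  assumes fin: "finite (min_gens S)" and rk: "\<rho> \<subseteq> kernel_cong S" and eq: "cong_gen S \<rho> = kernel_cong S"
  shows "conn S \<rho>"
  unfolding conn_def
proof (intro allI ballI)
  fix s x y assume xy: "x \<in> Z S s" "y \<in> Z S s"
  then have "(x, y) \<in> cong_gen S \<rho>" using eq by (auto simp: kernel_cong_def Z_def)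
  then have "(x, y) \<in> eqc (Z S (phi S x)) (nabla_edges S (phi S x) \<union> rs S \<rho> (phi S x))"
    using cong_gen_forward[OF fin rk] by blast
  moreover have "phi S x = s" using xy by (simp add: Z_def)
  ultimately show "(x, y) \<in> eqc (Z S s) (nabla_edges S s \<union> rs S \<rho> s)" by simp
qed

lemma pres_of_conn:
  assumes fin: "finite (min_gens S)" and rk: "\<sigma> \<subseteq> kernel_cong S" and c: "conn S \<sigma>"
  shows "cong_gen S \<sigma> = kernel_cong S"
proof
  show "cong_gen S \<sigma> \<subseteq> kernel_cong S" using cong_gen_kernel[OF rk] .
  have main: "\<forall>x\<in>Z S s. \<forall>y\<in>Z S s. (x, y) \<in> cong_gen S \<sigma>" for s
  proof (induction s rule: less_induct)
    case (less s)
    let ?E = "nabla_edges S s \<union> rs S \<sigma> s"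
    have edge: "(u, v) \<in> cong_gen S \<sigma>" if uv: "(u, v) \<in> ?E" for u v
    proof (cases "(u, v) \<in> rs S \<sigma> s")
      case True
      then show ?thesis by (auto simp: rs_def intro: cong_gen.base)
    next
      case False
      then have nab: "(u, v) \<in> nabla_edges S s" using uv by blast
      then have Zuv: "u \<in> Z S s" "v \<in> Z S s" and sne: "(\<Sum>m\<in>min_gens S. u m * v m) \<noteq> 0"
        by (auto simp: nabla_edges_def)
      then obtain n where nG: "n \<in> min_gens S" and nz: "u n * v n \<noteq> 0"
        using sum.neutral by (metis (no_types, lifting))
      have n0: "n \<noteq> 0" using nG min_gens_sub by blast
      define u' where "u' = u(n := u n - 1)"
      define v' where "v' = v(n := v n - 1)"
      have uu: "u = (\<lambda>m. u' m + delta n 1 m)" using nz unfolding u'_def delta_def by (auto simp: fun_eq_iff)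
      have vv: "v = (\<lambda>m. v' m + delta n 1 m)" using nz unfolding v'_def delta_def by (auto simp: fun_eq_iff)
      have fu: "u' \<in> facts S" "v' \<in> facts S" using Zuv unfolding u'_def v'_def Z_def facts_def by auto
      have pu: "s = phi S u' + n" "s = phi S v' + n"
        using Zuv uu vv phi_add[of S u' "delta n 1"] phi_add[of S v' "delta n 1"] phi_delta[OF fin nG, of 1]
        by (simp_all add: Z_def)
      have "u' \<in> Z S (s - n)" "v' \<in> Z S (s - n)" using fu pu by (auto simp: Z_def)
      moreover have "s - n < s" using pu n0 by linarith
      ultimately have "(u', v') \<in> cong_gen S \<sigma>" using less.IH by blast
      then have "((\<lambda>m. u' m + delta n 1 m), (\<lambda>m. v' m + delta n 1 m)) \<in> cong_gen S \<sigma>"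
        using delta_facts[OF nG] by (rule cong_gen.add)
      then show ?thesis using uu vv by simp
    qed
    show ?case
    proof (intro ballI)
      fix x y assume xy: "x \<in> Z S s" "y \<in> Z S s"
      have "(x, y) \<in> eqc (Z S s) ?E" using c xy by (simp add: conn_def)
      then consider "x = y" | "(x, y) \<in> (?E \<union> ?E\<inverse>)\<^sup>+" unfolding eqc_def by blast
      then show "(x, y) \<in> cong_gen S \<sigma>"
      proof cases
        case 1
        then show ?thesis using xy by (auto simp: Z_def intro: cong_gen.refl)
      next
        case 2
        then show ?thesis
        proof (induction rule: trancl_induct)
          case (base y)
          then consider "(x, y) \<in> ?E" | "(y, x) \<in> ?E" by blast
          then show ?case by cases (auto intro: cong_gen.sym edge)
        next
          case (step y z)
          from step.hyps(2) consider "(y, z) \<in> ?E" | "(z, y) \<in> ?E" by blast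
          then have "(y, z) \<in> cong_gen S \<sigma>" by cases (auto intro: cong_gen.sym edge)
          with step.IH show ?case by (rule cong_gen.trans)
        qed
      qed
    qed
  qed
  show "kernel_cong S \<subseteq> cong_gen S \<sigma>"
  proof
    fix p assume "p \<in> kernel_cong S"
    then obtain a b where p: "p = (a, b)" "a \<in> Z S (phi S a)" "b \<in> Z S (phi S a)"
      by (auto simp: kernel_cong_def Z_def)
    then show "p \<in> cong_gen S \<sigma>" using main by blast
  qed
qed



section \<open>Minimal presentations: counting\<close>

lemma nc_eqc: "nc S s = card (Z S s // eqc (Z S s) (nabla_edges S s))"
proof -
  have "nabla_edges S s \<union> (nabla_edges S s)\<inverse> = nabla_edges S s" using nabla_sym[of S s] by (metis Un_absorb)
  then show ?thesis unfolding nc_def eqc_def by simp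
qed

lemma minpres_kernel: assumes "minimal_presentation S \<rho>" shows "\<rho> \<subseteq> kernel_cong S"
proof
  fix p assume "p \<in> \<rho>"
  then have "p \<in> cong_gen S \<rho>" by (rule cong_gen.base)
  then show "p \<in> kernel_cong S" using assms by (simp add: minimal_presentation_def)
qed

lemma minpres_conn:
  assumes fin: "finite (min_gens S)" and mp: "minimal_presentation S \<rho>"
  shows "conn S \<rho>"
  using conn_of_pres[OF fin minpres_kernel[OF mp]] mp by (simp add: minimal_presentation_def)

lemma minpres_ess:
  assumes fin: "finite (min_gens S)" and mp: "minimal_presentation S \<rho>" and p: "p \<in> rs S \<rho> s"
  shows "eqc (Z S s) (nabla_edges S s \<union> (rs S \<rho> s - {p})) \<noteq> eqc (Z S s) (nabla_edges S s \<union> rs S \<rho> s)"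
proof
  assume eq: "eqc (Z S s) (nabla_edges S s \<union> (rs S \<rho> s - {p})) = eqc (Z S s) (nabla_edges S s \<union> rs S \<rho> s)"
  let ?\<sigma> = "\<rho> - {p}"
  have rk: "\<rho> \<subseteq> kernel_cong S" using minpres_kernel[OF mp] .
  have sk: "?\<sigma> \<subseteq> kernel_cong S" using rk by blast
  have c: "conn S \<rho>" using minpres_conn[OF fin mp] .
  have ps: "phi S (fst p) = s" "p \<in> \<rho>" using p by (auto simp: rs_def)
  have rss: "rs S ?\<sigma> t = (if t = s then rs S \<rho> s - {p} else rs S \<rho> t)" for t
    using ps by (auto simp: rs_def)
  have "conn S ?\<sigma>"
    unfolding conn_def
  proof (intro allI ballI)
    fix t x y assume xy: "x \<in> Z S t" "y \<in> Z S t"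
    have h: "(x, y) \<in> eqc (Z S t) (nabla_edges S t \<union> rs S \<rho> t)" using c xy by (simp add: conn_def)
    show "(x, y) \<in> eqc (Z S t) (nabla_edges S t \<union> rs S ?\<sigma> t)"
    proof (cases "t = s")
      case True
      then show ?thesis using h eq rss[of t] by simp
    next
      case False
      then show ?thesis using h rss[of t] by simp
    qed
  qed
  then have "cong_gen S ?\<sigma> = kernel_cong S" using pres_of_conn[OF fin sk] by blast
  moreover have "?\<sigma> \<subset> \<rho>" using ps by blast
  ultimately show False using mp by (simp add: minimal_presentation_def)
qed

lemma quotient_total:
  assumes "V \<noteq> {}"
  shows "V // (V \<times> V) = {V}"
  using assms unfolding quotient_def by auto

lemma minpres_count:
  assumes fin: "finite (min_gens S)" and mp: "minimal_presentation S \<rho>" and ne: "Z S s \<noteq> {}"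
  shows "card (rs S \<rho> s) + 1 \<le> nc S s"
proof -
  let ?V = "Z S s" and ?B = "nabla_edges S s" and ?F = "rs S \<rho> s"
  have rk: "\<rho> \<subseteq> kernel_cong S" using minpres_kernel[OF mp] .
  have finV: "finite ?V" using finite_Z[OF fin] .
  have BF: "?B \<union> ?F \<subseteq> ?V \<times> ?V" using EE_sub[OF rk] .
  have finF: "finite ?F" using rs_sub[OF rk, of s] finite_subset finV by (meson finite_SigmaI)
  have ess: "\<forall>f\<in>?F. eqc ?V (?B \<union> (?F - {f})) \<noteq> eqc ?V (?B \<union> ?F)"
    using minpres_ess[OF fin mp] by blast
  have cnt: "card ?F + card (?V // eqc ?V (?B \<union> ?F)) \<le> card (?V // eqc ?V ?B)"
    using eqc_count[OF finV finF BF ess] .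
  have "eqc ?V (?B \<union> ?F) \<subseteq> ?V \<times> ?V" using eqc_sub[OF BF] .
  moreover have "?V \<times> ?V \<subseteq> eqc ?V (?B \<union> ?F)" using minpres_conn[OF fin mp] by (auto simp: conn_def)
  ultimately have "eqc ?V (?B \<union> ?F) = ?V \<times> ?V" by blast
  then have "card (?V // eqc ?V (?B \<union> ?F)) = 1" using quotient_total[OF ne] by simp
  then show ?thesis using cnt nc_eqc[of S s] by simp
qed

lemma minpres_rs_betti:
  assumes ns: "numerical_semigroup S" and mp: "minimal_presentation S \<rho>" and ne: "rs S \<rho> s \<noteq> {}"
  shows "s \<in> Betti S"
proof -
  have fin: "finite (min_gens S)" using finite_min_gens[OF ns] .
  have rk: "\<rho> \<subseteq> kernel_cong S" using minpres_kernel[OF mp] .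
  obtain p where p: "p \<in> rs S \<rho> s" using ne by blast
  then have "p \<in> Z S s \<times> Z S s" using rs_sub[OF rk, of s] by blast
  then have "fst p \<in> Z S s" by (simp add: mem_Times_iff)
  then have Zne: "Z S s \<noteq> {}" by blast
  have "s \<in> S" using \<open>fst p \<in> Z S s\<close> phi_in_S[OF ns] by (auto simp: Z_def)
  moreover have "card (rs S \<rho> s) \<ge> 1"
  proof -
    have "finite (rs S \<rho> s)" using rs_sub[OF rk, of s] finite_Z[OF fin] by (meson finite_SigmaI finite_subset)
    then show ?thesis using ne by (simp add: Suc_leI card_gt_0_iff)
  qed
  ultimately show ?thesis using minpres_count[OF fin mp Zne] by (simp add: Betti_def)
qed

lemma Betti_finite:
  assumes ns: "numerical_semigroup S"
  shows "finite (Betti S)"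
proof -
  have fin: "finite (min_gens S)" using finite_min_gens[OF ns] .
  obtain N where N: "\<forall>x\<ge>N. x \<in> S" using ns_bound[OF ns] by blast
  have bnd: "b < N + 2 * Max (min_gens S)" if b: "b \<in> Betti S" for b
  proof -
    let ?V = "Z S b" and ?R = "eqc (Z S b) (nabla_edges S b)"
    have eqv: "equiv ?V ?R" using eqc_equiv[OF nabla_sub] .
    have finQ: "finite (?V // ?R)" using finite_quotient[OF finite_Z[OF fin]] eqc_sub[OF nabla_sub] by blast
    have "card (?V // ?R) > 1" using b nc_eqc[of S b] by (simp add: Betti_def)
    then have "\<not> (\<forall>X\<in>?V // ?R. \<forall>Y\<in>?V // ?R. X = Y)" using card_le_Suc0_iff_eq[OF finQ] by simp
    then obtain X Y where XY: "X \<in> ?V // ?R" "Y \<in> ?V // ?R" "X \<noteq> Y" by blast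
    then obtain x y where xy: "x \<in> ?V" "y \<in> ?V" "X = ?R `` {x}" "Y = ?R `` {y}" by (auto elim!: quotientE)
    have nR: "(x, y) \<notin> ?R"
    proof
      assume "(x, y) \<in> ?R"
      then have "X = Y" using xy equiv_class_eq[OF eqv] by simp
      then show False using XY by simp
    qed
    have "x \<noteq> y" using nR xy eqc_refl[of x ?V] by auto
    have b0: "b \<noteq> 0"
    proof
      assume "b = 0"
      then have "x = (\<lambda>_. 0)" "y = (\<lambda>_. 0)" using xy phi_zero_iff[OF fin] by (auto simp: Z_def)
      then show False using \<open>x \<noteq> y\<close> by simp
    qed
    have px: "phi S x = b" "phi S y = b" using xy by (simp_all add: Z_def)
    have "x \<noteq> (\<lambda>_. 0)"
    proof
      assume "x = (\<lambda>_. 0)" then have "phi S x = 0" by (simp add: phi_def)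
      then show False using px b0 by simp
    qed
    moreover have "y \<noteq> (\<lambda>_. 0)"
    proof
      assume "y = (\<lambda>_. 0)" then have "phi S y = 0" by (simp add: phi_def)
      then show False using px b0 by simp
    qed
    ultimately obtain n m where nm: "x n \<noteq> 0" "y m \<noteq> 0" by (metis ext)
    have xf: "x \<in> facts S" "y \<in> facts S" using xy by (auto simp: Z_def)
    have nG: "n \<in> min_gens S" "m \<in> min_gens S" using facts_outside xf nm by blast+
    have "n \<le> Max (min_gens S)" "m \<le> Max (min_gens S)" using nG fin by auto
    moreover have "b < N + n + m"
    proof (rule ccontr)
      assume "\<not> b < N + n + m"
      then have "b - n - m \<in> S" using N by simp
      then obtain z where z: "z \<in> Z S (b - n - m)" using Z_nonempty[OF ns] by blast
      define w where "w = (\<lambda>i. z i + delta n 1 i + delta m 1 i)"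
      have wf: "w \<in> facts S" using z nG unfolding w_def by (auto simp: Z_def facts_def delta_def)
      have "phi S w = phi S z + n + m"
      proof -
        have "phi S w = phi S (\<lambda>i. z i + delta n 1 i) + phi S (delta m 1)"
          unfolding w_def by (rule phi_add)
        also have "\<dots> = phi S z + n + m" using phi_add[of S z "delta n 1"] phi_delta[OF fin nG(1)] phi_delta[OF fin nG(2)] by simp
        finally show ?thesis .
      qed
      then have "w \<in> ?V" using wf z \<open>\<not> b < N + n + m\<close> by (simp add: Z_def)
      moreover have "w n \<noteq> 0" "w m \<noteq> 0" unfolding w_def delta_def by auto
      ultimately have "(x, w) \<in> ?R" "(w, y) \<in> ?R"
        using share_edge[OF fin xy(1), of w n "{}"] share_edge[OF fin _ xy(2), of w m "{}"] nm by auto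
      then have "(x, y) \<in> ?R" by (rule eqc_trans)
      then show False using nR by simp
    qed
    ultimately show ?thesis by linarith
  qed
  then have "Betti S \<subseteq> {..< N + 2 * Max (min_gens S)}" by auto
  then show ?thesis using finite_subset by blast
qed

lemma minpres_bound:
  assumes ns: "numerical_semigroup S" and mp: "minimal_presentation S \<rho>"
  shows "finite \<rho> \<and> card \<rho> \<le> (\<Sum>b\<in>Betti S. nc S b - 1)"
proof -
  have fin: "finite (min_gens S)" using finite_min_gens[OF ns] .
  have rk: "\<rho> \<subseteq> kernel_cong S" using minpres_kernel[OF mp] .
  have finB: "finite (Betti S)" using Betti_finite[OF ns] .
  have eq: "\<rho> = (\<Union>b\<in>Betti S. rs S \<rho> b)"
  proof
    show "\<rho> \<subseteq> (\<Union>b\<in>Betti S. rs S \<rho> b)"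
    proof
      fix p assume p: "p \<in> \<rho>"
      then have "p \<in> rs S \<rho> (phi S (fst p))" by (simp add: rs_def)
      moreover then have "phi S (fst p) \<in> Betti S" using minpres_rs_betti[OF ns mp] by blast
      ultimately show "p \<in> (\<Union>b\<in>Betti S. rs S \<rho> b)" by blast
    qed
    show "(\<Union>b\<in>Betti S. rs S \<rho> b) \<subseteq> \<rho>" by (auto simp: rs_def)
  qed
  have finrs: "finite (rs S \<rho> b)" for b
    using rs_sub[OF rk, of b] finite_Z[OF fin] by (meson finite_SigmaI finite_subset)
  have "finite \<rho>" using eq finB finrs by (metis finite_UN_I)
  moreover have "card \<rho> \<le> (\<Sum>b\<in>Betti S. card (rs S \<rho> b))"
    using card_UN_le[OF finB, of "rs S \<rho>"] eq by simp
  moreover have "(\<Sum>b\<in>Betti S. card (rs S \<rho> b)) \<le> (\<Sum>b\<in>Betti S. nc S b - 1)"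
  proof (rule sum_mono)
    fix b assume "b \<in> Betti S"
    then have "Z S b \<noteq> {}"
    proof -
      assume "b \<in> Betti S"
      then have "b \<in> S" by (simp add: Betti_def)
      then show ?thesis using Z_nonempty[OF ns] by blast
    qed
    then show "card (rs S \<rho> b) \<le> nc S b - 1" using minpres_count[OF fin mp] by fastforce
  qed
  ultimately show ?thesis by linarith
qed



section \<open>Upper bound via Betti-sortedness\<close>

definition W :: "nat set \<Rightarrow> nat \<Rightarrow> nat set" where
  "W S s = {n. \<exists>x\<in>Z S s. x n \<noteq> 0}"

lemma W_sub: "W S s \<subseteq> min_gens S"
  unfolding W_def Z_def using facts_outside by blast

definition pick :: "(nat \<Rightarrow> nat) set \<Rightarrow> nat" where
  "pick C = (SOME n. \<exists>x\<in>C. x n \<noteq> 0)"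

lemma quot_sub:
  assumes "C \<in> Z S t // eqc (Z S t) (nabla_edges S t)"
  shows "C \<subseteq> Z S t"
  using assms eqc_sub[OF nabla_sub, of S t] by (auto elim!: quotientE)

lemma pick_prop:
  assumes fin: "finite (min_gens S)" and t0: "t \<noteq> 0" and C: "C \<in> Z S t // eqc (Z S t) (nabla_edges S t)"
  shows "\<exists>x\<in>C. x (pick C) \<noteq> 0"
proof -
  have eqv: "equiv (Z S t) (eqc (Z S t) (nabla_edges S t))" using eqc_equiv[OF nabla_sub] .
  obtain x where x: "x \<in> C" using in_quotient_imp_non_empty[OF eqv C] by blast
  then have "x \<in> Z S t" using quot_sub[OF C] by blast
  then have "phi S x = t" by (simp add: Z_def)
  have "x \<noteq> (\<lambda>_. 0)"
  proof
    assume "x = (\<lambda>_. 0)" then have "phi S x = 0" by (simp add: phi_def)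
    then show False using \<open>phi S x = t\<close> t0 by simp
  qed
  then obtain n where "x n \<noteq> 0" by (metis ext)
  then have "\<exists>n. \<exists>x\<in>C. x n \<noteq> 0" using x by blast
  then show ?thesis unfolding pick_def by (rule someI_ex)
qed

lemma pick_W:
  assumes fin: "finite (min_gens S)" and t0: "t \<noteq> 0" and C: "C \<in> Z S t // eqc (Z S t) (nabla_edges S t)"
  shows "pick C \<in> W S t"
  using pick_prop[OF assms] quot_sub[OF C] unfolding W_def by blast

lemma pick_inj:
  assumes fin: "finite (min_gens S)" and t0: "t \<noteq> 0"
  shows "inj_on pick (Z S t // eqc (Z S t) (nabla_edges S t))"
proof (rule inj_onI)
  fix C1 C2 assume C: "C1 \<in> Z S t // eqc (Z S t) (nabla_edges S t)" "C2 \<in> Z S t // eqc (Z S t) (nabla_edges S t)"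
    and eq: "pick C1 = pick C2"
  have eqv: "equiv (Z S t) (eqc (Z S t) (nabla_edges S t))" using eqc_equiv[OF nabla_sub] .
  obtain x1 where x1: "x1 \<in> C1" "x1 (pick C1) \<noteq> 0" using pick_prop[OF fin t0 C(1)] by blast
  obtain x2 where x2: "x2 \<in> C2" "x2 (pick C1) \<noteq> 0" using pick_prop[OF fin t0 C(2)] eq by auto
  have "x1 \<in> Z S t" "x2 \<in> Z S t" using x1 x2 quot_sub C by blast+
  then have "(x1, x2) \<in> eqc (Z S t) (nabla_edges S t \<union> {})" using share_edge[OF fin] x1 x2 by blast
  then have "(x1, x2) \<in> eqc (Z S t) (nabla_edges S t)" by simp
  then show "C1 = C2" using quotient_eqI[OF eqv C(1) C(2) x1(1) x2(1)] by blast
qed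

lemma nc_le_W:
  assumes fin: "finite (min_gens S)" and t0: "t \<noteq> 0"
  shows "nc S t \<le> card (W S t)"
proof -
  have "finite (W S t)" using W_sub fin by (rule finite_subset)
  then have "card (Z S t // eqc (Z S t) (nabla_edges S t)) \<le> card (W S t)"
    using card_inj_on_le[OF pick_inj[OF fin t0]] pick_W[OF fin t0] by blast
  then show ?thesis using nc_eqc by metis
qed

lemma nc_step:
  assumes ns: "numerical_semigroup S" and Zs: "Z S s \<noteq> {}" and ts: "t - s \<in> S" and lt: "s < t"
  shows "W S s \<subseteq> W S t \<and> nc S t \<le> 1 + card (W S t - W S s)"
proof -
  have fin: "finite (min_gens S)" using finite_min_gens[OF ns] .
  let ?Q = "Z S t // eqc (Z S t) (nabla_edges S t)" and ?R = "eqc (Z S t) (nabla_edges S t)"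
  have eqv: "equiv (Z S t) ?R" using eqc_equiv[OF nabla_sub] .
  have t0: "t \<noteq> 0" using lt by simp
  obtain z0 where z0: "z0 \<in> Z S s" using Zs by blast
  obtain w0 where w0: "w0 \<in> Z S (t - s)" using Z_nonempty[OF ns ts] by blast
  have "w0 \<noteq> (\<lambda>_. 0)"
  proof
    assume "w0 = (\<lambda>_. 0)" then have "phi S w0 = 0" by (simp add: phi_def)
    then show False using w0 lt by (simp add: Z_def)
  qed
  then obtain k where k: "w0 k \<noteq> 0" by (metis ext)
  have addZ: "(\<lambda>i. z i + w0 i) \<in> Z S t" if "z \<in> Z S s" for z
  proof -
    have "phi S (\<lambda>i. z i + w0 i) = t" using that w0 lt by (simp add: Z_def phi_add)
    moreover have "(\<lambda>i. z i + w0 i) \<in> facts S" using that w0 by (simp add: Z_def facts_def)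
    ultimately show ?thesis by (simp add: Z_def)
  qed
  have sub: "W S s \<subseteq> W S t"
  proof
    fix n assume "n \<in> W S s"
    then obtain z where z: "z \<in> Z S s" "z n \<noteq> 0" unfolding W_def by blast
    have "(\<lambda>i. z i + w0 i) n \<noteq> 0" using z(2) by simp
    then have "\<exists>x\<in>Z S t. x n \<noteq> 0" by (rule bexI[OF _ addZ[OF z(1)]])
    then show "n \<in> W S t" unfolding W_def by simp
  qed
  define Cs where "Cs = ?R `` {(\<lambda>i. z0 i + w0 i)}"
  have CsQ: "Cs \<in> ?Q" unfolding Cs_def by (rule quotientI[OF addZ[OF z0]])
  have notW: "pick C \<notin> W S s" if C: "C \<in> ?Q - {Cs}" for C
  proof
    assume "pick C \<in> W S s"
    then obtain z where z: "z \<in> Z S s" "z (pick C) \<noteq> 0" by (auto simp: W_def)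
    obtain x where x: "x \<in> C" "x (pick C) \<noteq> 0" using pick_prop[OF fin t0] C by blast
    have xZ: "x \<in> Z S t" using x quot_sub C by blast
    have "(\<lambda>i. z i + w0 i) (pick C) \<noteq> 0" using z by simp
    then have "(x, (\<lambda>i. z i + w0 i)) \<in> eqc (Z S t) (nabla_edges S t \<union> {})"
      using share_edge[OF fin xZ addZ[OF z(1)] x(2)] by blast
    moreover have "((\<lambda>i. z i + w0 i), (\<lambda>i. z0 i + w0 i)) \<in> eqc (Z S t) (nabla_edges S t \<union> {})"
      using share_edge[OF fin addZ[OF z(1)] addZ[OF z0], of k "{}"] k by simp
    ultimately have "(x, (\<lambda>i. z0 i + w0 i)) \<in> ?R" using eqc_trans[of x _ "Z S t" "nabla_edges S t"] by simp
    then have "((\<lambda>i. z0 i + w0 i), x) \<in> ?R" by (rule eqc_sym)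
    then have "x \<in> Cs" unfolding Cs_def by simp
    have "C \<in> ?Q" using C by simp
    have "C = Cs" by (rule quotient_eqI[OF eqv \<open>C \<in> ?Q\<close> CsQ x(1) \<open>x \<in> Cs\<close> eqc_refl[OF xZ]])
    then show False using C by blast
  qed
  have "W S t - W S s \<subseteq> min_gens S" using W_sub by blast
  then have finW: "finite (W S t - W S s)" using fin by (rule finite_subset)
  have "card (?Q - {Cs}) \<le> card (W S t - W S s)"
  proof (rule card_inj_on_le[OF _ _ finW])
    show "inj_on pick (?Q - {Cs})" using pick_inj[OF fin t0] by (rule inj_on_subset) blast
    show "pick ` (?Q - {Cs}) \<subseteq> W S t - W S s" using pick_W[OF fin t0] notW by blast
  qed
  moreover have "finite ?Q" using finite_quotient[OF finite_Z[OF fin]] eqc_sub[OF nabla_sub] by blast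
  then have "card ?Q = Suc (card (?Q - {Cs}))" using card_Suc_Diff1[OF _ CsQ] by simp
  ultimately show ?thesis using sub nc_eqc[of S t] by simp
qed

lemma Betti_nonzero:
  assumes fin: "finite (min_gens S)" and b: "b \<in> Betti S"
  shows "b \<noteq> 0"
proof
  assume b0: "b = 0"
  have "Z S 0 \<subseteq> {(\<lambda>_. 0)}" using phi_zero_iff[OF fin] by (auto simp: Z_def)
  then have "Z S 0 // eqc (Z S 0) (nabla_edges S 0) \<subseteq> {eqc (Z S 0) (nabla_edges S 0) `` {(\<lambda>_. 0)}}"
    unfolding quotient_def by blast
  then have "card (Z S 0 // eqc (Z S 0) (nabla_edges S 0)) \<le> card {eqc (Z S 0) (nabla_edges S 0) `` {(\<lambda>_. 0)}}"
    by (rule card_mono[rotated]) simp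
  then have "card (Z S 0 // eqc (Z S 0) (nabla_edges S 0)) \<le> 1" by simp
  then show False using b b0 nc_eqc[of S 0] by (simp add: Betti_def)
qed

lemma tele:
  assumes ns: "numerical_semigroup S" and bs: "betti_sorted S"
  shows "B \<subseteq> Betti S \<Longrightarrow> B \<noteq> {} \<Longrightarrow> (\<Sum>b\<in>B. nc S b - 1) < card (W S (Max B))"
proof (induction "card B" arbitrary: B rule: less_induct)
  case less
  have fin: "finite (min_gens S)" using finite_min_gens[OF ns] .
  have finB: "finite B" using less.prems(1) Betti_finite[OF ns] finite_subset by blast
  define m where "m = Max B"
  have mB: "m \<in> B" using finB less.prems(2) unfolding m_def by simp
  have mBetti: "m \<in> Betti S" using mB less.prems(1) by blast
  have m0: "m \<noteq> 0" using Betti_nonzero[OF fin mBetti] .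
  have ncm: "nc S m > 1" using mBetti by (simp add: Betti_def)
  have sumB: "(\<Sum>b\<in>B. nc S b - 1) = (nc S m - 1) + (\<Sum>b\<in>B - {m}. nc S b - 1)"
    using sum.remove[OF finB mB] .
  show ?case
  proof (cases "B - {m} = {}")
    case True
    then have "(\<Sum>b\<in>B - {m}. nc S b - 1) = 0" by (simp only: sum.empty)
    moreover have "nc S m \<le> card (W S m)" using nc_le_W[OF fin m0] .
    ultimately show ?thesis using sumB ncm unfolding m_def by simp
  next
    case False
    define m' where "m' = Max (B - {m})"
    have finB': "finite (B - {m})" using finB by simp
    have m'B: "m' \<in> B - {m}" unfolding m'_def by (rule Max_in[OF finB' False])
    have "m' \<le> m" using m'B finB unfolding m_def by simp
    then have lt: "m' < m" using m'B by auto
    have m'Betti: "m' \<in> Betti S" using m'B less.prems(1) by blast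
    have "le_S S m' m \<or> le_S S m m'" using bs mBetti m'Betti by (simp add: betti_sorted_def)
    then have "m - m' \<in> S" using lt by (auto simp: le_S_def)
    moreover have "Z S m' \<noteq> {}" using m'Betti Z_nonempty[OF ns] by (simp add: Betti_def)
    ultimately have st: "W S m' \<subseteq> W S m" "nc S m \<le> 1 + card (W S m - W S m')"
      using nc_step[OF ns _ _ lt] by blast+
    have IH: "(\<Sum>b\<in>B - {m}. nc S b - 1) < card (W S m')"
      using less.hyps[of "B - {m}"] finB mB less.prems(1) False unfolding m'_def
      by (metis card_Diff1_less Diff_subset order_trans)
    have finW: "finite (W S m)" using W_sub fin by (rule finite_subset)
    have "card (W S m - W S m') = card (W S m) - card (W S m')" using card_Diff_subset st(1) finW
      by (meson finite_subset)
    moreover have "card (W S m') \<le> card (W S m)" using card_mono[OF finW st(1)] .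
    ultimately show ?thesis using sumB st(2) IH ncm unfolding m_def by linarith
  qed
qed

lemma betti_sum_bound:
  assumes ns: "numerical_semigroup S" and bs: "betti_sorted S"
  shows "(\<Sum>b\<in>Betti S. nc S b - 1) \<le> embdim S - 1"
proof (cases "Betti S = {}")
  case True
  then show ?thesis by simp
next
  case False
  have fin: "finite (min_gens S)" using finite_min_gens[OF ns] .
  have "(\<Sum>b\<in>Betti S. nc S b - 1) < card (W S (Max (Betti S)))" using tele[OF ns bs _ False] by blast
  moreover have "card (W S (Max (Betti S))) \<le> embdim S" unfolding embdim_def using card_mono[OF fin W_sub] .
  ultimately show ?thesis by linarith
qed



section \<open>Lower bound via linear algebra\<close>

interpretation QV: vector_space "\<lambda>(c::rat) (f::nat \<Rightarrow> rat). (\<lambda>n. c * f n)"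
  by unfold_locales (simp_all add: fun_eq_iff algebra_simps)

definition vec :: "(nat \<Rightarrow> nat) \<Rightarrow> nat \<Rightarrow> rat" where
  "vec a = (\<lambda>n. of_nat (a n))"

definition Dv :: "((nat \<Rightarrow> nat) \<times> (nat \<Rightarrow> nat)) set \<Rightarrow> (nat \<Rightarrow> rat) set" where
  "Dv \<rho> = (\<lambda>p. vec (fst p) - vec (snd p)) ` \<rho>"

lemma sum_fun_apply: "(\<Sum>x\<in>A. f x) n = (\<Sum>x\<in>A. f x n)"
  by (induction A rule: infinite_finite_induct) auto

lemma cong_span:
  "p \<in> cong_gen S \<rho> \<Longrightarrow> vec (fst p) - vec (snd p) \<in> QV.span (Dv \<rho>)"
proof (induction rule: cong_gen.induct)
  case (base p)
  then show ?case unfolding Dv_def by (intro QV.span_base) blast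
next
  case (refl a)
  show ?case unfolding fst_conv snd_conv diff_self by (rule QV.span_zero)
next
  case (sym a b)
  have e: "vec b - vec a = - (vec a - vec b)" by simp
  show ?case unfolding fst_conv snd_conv e by (rule QV.span_neg[OF sym.IH[unfolded fst_conv snd_conv]])
next
  case (trans a b c)
  have e: "vec a - vec c = (vec a - vec b) + (vec b - vec c)" by simp
  show ?case unfolding fst_conv snd_conv e
    by (rule QV.span_add[OF trans.IH(1)[unfolded fst_conv snd_conv] trans.IH(2)[unfolded fst_conv snd_conv]])
next
  case (add a b c)
  have e: "vec (\<lambda>n. a n + c n) - vec (\<lambda>n. b n + c n) = vec a - vec b"
    by (simp add: vec_def fun_eq_iff)
  show ?case unfolding fst_conv snd_conv e using add.IH[unfolded fst_conv snd_conv] .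
qed

lemma lower_bound:
  assumes fin: "finite (min_gens S)" and pres: "cong_gen S \<rho> = kernel_cong S" and finr: "finite \<rho>"
  shows "embdim S - 1 \<le> card \<rho>"
proof (cases "min_gens S = {}")
  case True
  then show ?thesis by (simp add: embdim_def)
next
  case False
  then obtain n0 where n0: "n0 \<in> min_gens S" by blast
  have n00: "n0 \<noteq> 0" using n0 min_gens_sub by blast
  define g where "g m = vec (delta m n0) - vec (delta n0 m)" for m
  have gval: "g m i = (if i = m then of_nat n0 else 0)" if "m \<noteq> n0" "i \<noteq> n0" for m i
    using that unfolding g_def vec_def delta_def by simp
  let ?A = "g ` (min_gens S - {n0})"
  have inj: "inj_on g (min_gens S - {n0})"
  proof (rule inj_onI)
    fix m1 m2 assume m: "m1 \<in> min_gens S - {n0}" "m2 \<in> min_gens S - {n0}" and eq: "g m1 = g m2"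
    have "g m1 m1 = of_nat n0" using gval[of m1 m1] m by simp
    moreover have "g m2 m1 = (if m1 = m2 then of_nat n0 else 0)" using gval[of m2 m1] m by simp
    ultimately show "m1 = m2" using eq n00 by (auto split: if_splits)
  qed
  have cardA: "card ?A = embdim S - 1"
    using card_image[OF inj] n0 fin by (simp add: embdim_def)
  have Aspan: "?A \<subseteq> QV.span (Dv \<rho>)"
  proof
    fix v assume "v \<in> ?A"
    then obtain m where m: "m \<in> min_gens S" "v = g m" by blast
    have "(delta m n0, delta n0 m) \<in> kernel_cong S"
      using m n0 by (simp add: kernel_cong_def delta_facts phi_delta[OF fin] mult.commute)
    then have "(delta m n0, delta n0 m) \<in> cong_gen S \<rho>" using pres by simp
    then show "v \<in> QV.span (Dv \<rho>)" using cong_span m unfolding g_def by fastforce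
  qed
  have indep: "QV.independent ?A"
  proof
    assume "QV.dependent ?A"
    then obtain t u where t: "finite t" "t \<subseteq> ?A" and s0: "(\<Sum>v\<in>t. (\<lambda>n. u v * v n)) = 0"
      and v: "\<exists>v\<in>t. u v \<noteq> 0" unfolding QV.dependent_explicit by blast
    then obtain v where v: "v \<in> t" "u v \<noteq> 0" by blast
    then obtain m where m: "m \<in> min_gens S - {n0}" "v = g m" using t by blast
    have vm: "v m = of_nat n0" using gval[of m m] m by simp
    have trm: "u w * w m = (if w = v then u v * of_nat n0 else 0)" if wt: "w \<in> t" for w
    proof -
      obtain m' where m': "m' \<in> min_gens S - {n0}" "w = g m'" using wt t by blast
      show ?thesis
      proof (cases "m' = m")
        case True
        then show ?thesis using m m' vm by simp
      next
        case False
        then have "w m = 0" using gval[of m' m] m m' by simp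
        moreover then have "w \<noteq> v" using vm n00 by auto
        ultimately show ?thesis by simp
      qed
    qed
    have "0 = (\<Sum>w\<in>t. (\<lambda>n. u w * w n)) m" using s0 by simp
    also have "\<dots> = (\<Sum>w\<in>t. u w * w m)" by (simp add: sum_fun_apply)
    also have "\<dots> = (\<Sum>w\<in>t. if w = v then u v * of_nat n0 else 0)" using trm by (rule sum.cong[OF HOL.refl])
    also have "\<dots> = u v * of_nat n0" using t(1) v(1) by simp
    finally show False using v(2) n00 by simp
  qed
  have finD: "finite (Dv \<rho>)" using finr unfolding Dv_def by simp
  have "card ?A \<le> card (Dv \<rho>)" using QV.independent_span_bound[OF finD indep Aspan] by simp
  also have "\<dots> \<le> card \<rho>" unfolding Dv_def using card_image_le[OF finr] .
  finally show ?thesis using cardA by simp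
qed

theorem corollary6p3:
  assumes "numerical_semigroup S"
    and "betti_sorted S"
  shows "complete_intersection S"
  unfolding complete_intersection_def
proof (intro allI impI)
  fix \<rho> assume mp: "minimal_presentation S \<rho>"
  have fin: "finite (min_gens S)" using finite_min_gens[OF assms(1)] .
  have b: "finite \<rho> \<and> card \<rho> \<le> (\<Sum>b\<in>Betti S. nc S b - 1)" using minpres_bound[OF assms(1) mp] .
  moreover have "(\<Sum>b\<in>Betti S. nc S b - 1) \<le> embdim S - 1" using betti_sum_bound[OF assms] .
  moreover have "embdim S - 1 \<le> card \<rho>"
    using lower_bound[OF fin _ conjunct1[OF b]] mp by (simp add: minimal_presentation_def)
  ultimately show "finite \<rho> \<and> card \<rho> = embdim S - 1" by linarith
qed

end
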